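(* Let $L$ be a Jordan subalgebra of $\mathrm{Sym}(p)$ and consider the Gaussian linear concentration model on $L$ with data $x^1,\dots,x^n$ and $W=n^{-1}\sum_ix^i(x^i)^\top$. Then $I_p\in L$, and if $\Pi_L(W)$ is invertible, the matrix $\{\Pi_L(W)\}^{-1}$ lies in $L$, it is the unique invertible solution $K\in L$ of the likelihood equation $\Pi_L(W)=\Pi_L(K^{-1})$ (so the MLE is $\hat K=\{\Pi_L(W)\}^{-1}$), and it solves the score matching equation $\Pi_L(K\circ W)=I_p$; in particular, when the score matching estimator $\check K$ exists it satisfies $\check K=\hat K=\{\Pi_L(W)\}^{-1}$.
   Context: $\mathrm{Sym}(p)$: real symmetric $p\times p$ matrices with trace inner product; $\mathrm{Sym}_+(p)$: positive definite ones; a Jordan subalgebra is a linear subspace $L$ closed under the Jordan product $A\circ B=(AB^\top+BA^\top)/2$ (equivalently $L\cap\mathrm{Sym}_+(p)$ is closed under inversion) and containing $L\cap\mathrm{Sym}_+(p)\neq\emptyset$; $\Pi_L$ is orthogonal projection onto $L$. The Gaussian linear concentration model is $\{N_p(0,K^{-1}):K\in L\cap\mathrm{Sym}_+(p)\}$; its log-likelihood is proportional to $\log\det K-\operatorname{tr}(KW)$. The score matching estimator (SME) $\check K$ is said to exist if the linear equation $\Pi_L(K\circ W)=I_p$ has a unique solution $K\in L$, which is then $\check K$ (no positive definiteness required). *)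

theory Defs
  imports "HOL-Analysis.Analysis"
begin

type_synonym 'p mat = "real^'p^'p"

definition Sym :: "('p::finite) mat set" where
  "Sym = {A. transpose A = A}"

definition pos_def :: "('p::finite) mat \<Rightarrow> bool" where
  "pos_def A \<longleftrightarrow> transpose A = A \<and> (\<forall>x. x \<noteq> 0 \<longrightarrow> x \<bullet> (A *v x) > 0)"

definition Sym_plus :: "('p::finite) mat set" where
  "Sym_plus = {A. pos_def A}"

definition tr_inner :: "('p::finite) mat \<Rightarrow> 'p mat \<Rightarrow> real" where
  "tr_inner A B = trace (transpose A ** B)"

definition jprod :: "('p::finite) mat \<Rightarrow> 'p mat \<Rightarrow> 'p mat" where
  "jprod A B = (1/2) *\<^sub>R (A ** transpose B + B ** transpose A)"

definition jordan_subalgebra :: "('p::finite) mat set \<Rightarrow> bool" where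
  "jordan_subalgebra L \<longleftrightarrow> subspace L \<and> L \<subseteq> Sym
     \<and> (\<forall>A\<in>L. \<forall>B\<in>L. jprod A B \<in> L) \<and> L \<inter> Sym_plus \<noteq> {}"

definition proj :: "('p::finite) mat set \<Rightarrow> 'p mat \<Rightarrow> 'p mat" where
  "proj L X = (THE Y. Y \<in> L \<and> (\<forall>Z\<in>L. tr_inner (X - Y) Z = 0))"

definition sample_cov :: "nat \<Rightarrow> (nat \<Rightarrow> real^'p) \<Rightarrow> ('p::finite) mat" where
  "sample_cov n x = (1 / real n) *\<^sub>R (\<Sum>i<n. (\<chi> a b. x i $ a * x i $ b))"

definition sme_exists :: "('p::finite) mat set \<Rightarrow> 'p mat \<Rightarrow> bool" where
  "sme_exists L W \<longleftrightarrow> (\<exists>!K. K \<in> L \<and> proj L (jprod K W) = mat 1)"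

definition sme :: "('p::finite) mat set \<Rightarrow> 'p mat \<Rightarrow> 'p mat" where
  "sme L W = (THE K. K \<in> L \<and> proj L (jprod K W) = mat 1)"

end

theory Submission
  imports Defs
begin

lemma minv: fixes A :: "real^'n^'n" assumes "invertible A"
  shows "A ** matrix_inv A = mat 1 \<and> matrix_inv A ** A = mat 1"
  using assms unfolding invertible_def matrix_inv_def by (rule someI_ex)

lemma minv_unique: fixes A X :: "real^'n^'n" assumes "invertible A" "A ** X = mat 1"
  shows "X = matrix_inv A"
proof -
  have "X = (matrix_inv A ** A) ** X" using minv[OF assms(1)] by simp
  also have "\<dots> = matrix_inv A" by (simp add: matrix_mul_assoc[symmetric] assms(2))
  finally show ?thesis .
qed

lemma minv_inv: fixes A :: "real^'n^'n" assumes "invertible A"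
  shows "invertible (matrix_inv A) \<and> matrix_inv (matrix_inv A) = A"
proof -
  have "invertible (matrix_inv A)" using minv[OF assms] unfolding invertible_def by blast
  moreover have "A = matrix_inv (matrix_inv A)"
    by (rule minv_unique[OF \<open>invertible (matrix_inv A)\<close>]) (use minv[OF assms] in simp)
  ultimately show ?thesis by simp
qed

lemma tr_inner_eq: "tr_inner A B = A \<bullet> B"
  unfolding tr_inner_def trace_def inner_vec_def matrix_matrix_mult_def transpose_def
  apply (simp add: inner_real_def)
  apply (subst sum.swap)
  apply (simp add: mult.commute)
  done

lemma proj_char: assumes "subspace L"
  shows "proj L X \<in> L \<and> (\<forall>Z\<in>L. (X - proj L X) \<bullet> Z = 0)"
proof -
  obtain y z where y: "y \<in> span L" "\<And>w. w \<in> span L \<Longrightarrow> orthogonal z w" "X = y + z"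
    using orthogonal_subspace_decomp_exists[of L X] by blast
  have sp: "span L = L" using assms by (simp add: span_eq_iff)
  have ex: "y \<in> L \<and> (\<forall>Z\<in>L. tr_inner (X - y) Z = 0)"
    using y sp by (auto simp: tr_inner_eq orthogonal_def span_base)
  have un: "Y = y" if "Y \<in> L \<and> (\<forall>Z\<in>L. tr_inner (X - Y) Z = 0)" for Y
  proof -
    have d: "y - Y \<in> L" using that ex assms subspace_diff by blast
    have "(X - Y) \<bullet> (y - Y) - (X - y) \<bullet> (y - Y) = 0"
      using that ex d by (simp add: tr_inner_eq)
    hence "(y - Y) \<bullet> (y - Y) = 0" by (simp add: inner_diff_left)
    thus ?thesis by simp
  qed
  have "proj L X = y" unfolding proj_def
    by (rule the_equality) (use ex un in blast)+
  thus ?thesis using ex by (simp add: tr_inner_eq)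
qed

lemma proj_eqI: assumes "subspace L" "Y \<in> L" "\<forall>Z\<in>L. (X - Y) \<bullet> Z = 0"
  shows "proj L X = Y"
proof -
  have P: "proj L X \<in> L" "\<forall>Z\<in>L. (X - proj L X) \<bullet> Z = 0" using proj_char[OF assms(1)] by auto
  have d: "Y - proj L X \<in> L" using P assms subspace_diff by blast
  have "(X - proj L X) \<bullet> (Y - proj L X) - (X - Y) \<bullet> (Y - proj L X) = 0"
    using P assms d by simp
  hence "(Y - proj L X) \<bullet> (Y - proj L X) = 0" by (simp add: inner_diff_left)
  thus ?thesis by simp
qed

lemma proj_id: "subspace L \<Longrightarrow> Y \<in> L \<Longrightarrow> proj L Y = Y"
  by (rule proj_eqI) auto

lemma jprod_sym: "transpose A = A \<Longrightarrow> transpose B = B \<Longrightarrow> jprod A B = (1/2) *\<^sub>R (A ** B + B ** A)"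
  by (simp add: jprod_def)

lemma posdef_inv: fixes A :: "real^'n^'n" assumes "pos_def A" shows "invertible A"
proof -
  have "x = 0" if "A *v x = 0" for x
    using assms that unfolding pos_def_def by (metis inner_zero_right less_irrefl)
  hence "\<exists>B. B ** A = mat 1" using matrix_left_invertible_ker by blast
  thus ?thesis using invertible_left_inverse by blast
qed

lemma matrix_add_rdistrib: "((A::real^'n^'m) + B) ** C = A ** C + B ** C"
  by (vector matrix_matrix_mult_def sum.distrib[symmetric] field_simps)

lemma comm_subspace: "subspace {X :: real^'n^'n. A ** X = X ** A}"
  unfolding subspace_def
  by (simp add: matrix_add_ldistrib matrix_add_rdistrib matrix_scalar_ac scalar_matrix_assoc[symmetric])

lemma solve_in_L:
  fixes L :: "('n::finite) mat set"
  assumes J: "jordan_subalgebra L" and A: "A \<in> L" "invertible A" and B: "B \<in> L" "A ** B = B ** A"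
  shows "\<exists>X\<in>L. A ** X = B"
proof -
  have sL: "subspace L" and LS: "L \<subseteq> Sym" and cl: "\<forall>A\<in>L. \<forall>B\<in>L. jprod A B \<in> L"
    using J unfolding jordan_subalgebra_def by auto
  define V where "V = L \<inter> {X. A ** X = X ** A}"
  have sV: "subspace V" unfolding V_def by (rule subspace_inter[OF sL comm_subspace])
  define f where "f = (\<lambda>X::real^'n^'n. A ** X)"
  have lf: "linear f" unfolding f_def
    by (rule linearI) (simp_all add: matrix_add_ldistrib matrix_scalar_ac scalar_matrix_assoc)
  have fV: "f ` V \<subseteq> V"
  proof
    fix Y assume "Y \<in> f ` V"
    then obtain X where X: "X \<in> L" "A ** X = X ** A" "Y = A ** X" unfolding V_def f_def by auto
    have "transpose A = A" "transpose X = X" using A X LS by (auto simp: Sym_def)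
    hence "jprod A X = A ** X" using X by (simp add: jprod_sym scaleR_2[symmetric] del: scaleR_2)
    hence "Y \<in> L" using cl A X by metis
    moreover have "A ** Y = Y ** A" using X by (metis matrix_mul_assoc)
    ultimately show "Y \<in> V" unfolding V_def by simp
  qed
  have inj: "inj f" unfolding f_def using minv[OF A(2)]
    by (metis injI matrix_mul_assoc matrix_mul_lid)
  have "dim (f ` V) = dim V"
    using dim_image_eq[OF lf] inj by (metis inj_on_subset subset_UNIV)
  moreover have sfV: "subspace (f ` V)"
    by (metis lf sV span_eq_iff span_linear_image subspace_span)
  ultimately have "f ` V = V"
    using subspace_dim_equal[OF sfV sV fV] by simp
  moreover have "B \<in> V" unfolding V_def using B by simp
  ultimately obtain X where "X \<in> V" "f X = B" by (metis imageE)
  thus ?thesis unfolding V_def f_def by auto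
qed

lemma ip_mul_left: fixes X Y Z :: "real^'n^'n" shows "(X ** Y) \<bullet> Z = trace ((transpose Y ** transpose X) ** Z)"
proof -
  have "(X ** Y) \<bullet> Z = tr_inner (X ** Y) Z" by (rule tr_inner_eq[symmetric])
  also have "\<dots> = trace ((transpose Y ** transpose X) ** Z)" unfolding tr_inner_def matrix_transpose_mul ..
  finally show ?thesis .
qed

lemma ip_mul_right: fixes X Y B :: "real^'n^'n" shows "B \<bullet> (X ** Y) = trace (transpose B ** (X ** Y))"
proof -
  have "B \<bullet> (X ** Y) = tr_inner B (X ** Y)" by (rule tr_inner_eq[symmetric])
  also have "\<dots> = trace (transpose B ** (X ** Y))" unfolding tr_inner_def ..
  finally show ?thesis .
qed

lemma jinner:
  fixes A B Z :: "real^'n^'n"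
  assumes a: "transpose A = A" and b: "transpose B = B" and z: "transpose Z = Z"
  shows "jprod A B \<bullet> Z = B \<bullet> jprod A Z"
proof -
  have l: "jprod A B \<bullet> Z = (1/2) * ((A ** B) \<bullet> Z + (B ** A) \<bullet> Z)"
    unfolding jprod_sym[OF a b] by (simp only: inner_scaleR_left inner_add_left)
  have r: "B \<bullet> jprod A Z = (1/2) * (B \<bullet> (A ** Z) + B \<bullet> (Z ** A))"
    unfolding jprod_sym[OF a z] by (simp only: inner_scaleR_right inner_add_right)
  have e1: "(A ** B) \<bullet> Z = trace ((B ** A) ** Z)" using ip_mul_left[of A B Z] a b by simp
  have e2: "(B ** A) \<bullet> Z = trace ((A ** B) ** Z)" using ip_mul_left[of B A Z] a b by simp
  have e3: "B \<bullet> (A ** Z) = trace ((B ** A) ** Z)"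
    using ip_mul_right[of B A Z] b by (simp only: matrix_mul_assoc)
  have e4: "B \<bullet> (Z ** A) = trace ((A ** B) ** Z)"
  proof -
    have "B \<bullet> (Z ** A) = trace (B ** (Z ** A))" using ip_mul_right[of B Z A] b by simp
    also have "\<dots> = trace ((B ** Z) ** A)" by (simp only: matrix_mul_assoc)
    also have "\<dots> = trace (A ** (B ** Z))" by (rule trace_mul_sym)
    also have "\<dots> = trace ((A ** B) ** Z)" by (simp only: matrix_mul_assoc)
    finally show ?thesis .
  qed
  show ?thesis unfolding l r e1 e2 e3 e4 by simp
qed

lemma cancel_left: fixes A :: "real^'n^'n"
  assumes "invertible A" "A ** X = A ** Y" shows "X = Y"
proof -
  have m: "matrix_inv A ** A = mat 1" using minv[OF assms(1)] by (rule conjunct2)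
  have "X = (matrix_inv A ** A) ** X" unfolding m by simp
  also have "\<dots> = matrix_inv A ** (A ** X)" by (simp only: matrix_mul_assoc)
  also have "\<dots> = matrix_inv A ** (A ** Y)" unfolding assms(2) ..
  also have "\<dots> = (matrix_inv A ** A) ** Y" by (simp only: matrix_mul_assoc)
  also have "\<dots> = Y" unfolding m by simp
  finally show ?thesis .
qed

lemma inv_in_L:
  fixes L :: "('n::finite) mat set"
  assumes J: "jordan_subalgebra L" and A: "A \<in> L" "invertible A" and I: "mat 1 \<in> L"
  shows "matrix_inv A \<in> L"
proof -
  obtain X where X: "X \<in> L" "A ** X = mat 1" using solve_in_L[OF J A I] by auto
  have "X = matrix_inv A" by (rule minv_unique[OF A(2) X(2)])
  thus ?thesis using X(1) by simp
qed

lemma one_in_L: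
  fixes L :: "('n::finite) mat set"
  assumes J: "jordan_subalgebra L" shows "mat 1 \<in> L"
proof -
  obtain K where K: "K \<in> L" "pos_def K" using J unfolding jordan_subalgebra_def Sym_plus_def by auto
  have iK: "invertible K" using posdef_inv K by blast
  obtain X where "X \<in> L" "K ** X = K" using solve_in_L[OF J K(1) iK K(1)] by auto
  moreover have "X = mat 1" using cancel_left[OF iK, of X "mat 1"] calculation by simp
  ultimately show ?thesis by simp
qed

lemma sample_cov_sym: "transpose (sample_cov n x) = sample_cov n x"
  by (simp add: sample_cov_def transpose_def vec_eq_iff sum_component mult.commute)


theorem theorem1:
  fixes L :: "('p::finite) mat set" and n :: nat and x :: "nat \<Rightarrow> real^'p"
  assumes "jordan_subalgebra L"
    and "n \<ge> 1"
  defines "W \<equiv> sample_cov n x"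
  shows "mat 1 \<in> L \<and>
    (invertible (proj L W) \<longrightarrow>
      (let M = matrix_inv (proj L W) in
         M \<in> L
       \<and> invertible M \<and> proj L W = proj L (matrix_inv M)
       \<and> (\<forall>K\<in>L. invertible K \<and> proj L W = proj L (matrix_inv K) \<longrightarrow> K = M)
       \<and> proj L (jprod M W) = mat 1
       \<and> (sme_exists L W \<longrightarrow> sme L W = M)))"
proof -
  note J = assms(1)
  have sL: "subspace L" and LS: "L \<subseteq> Sym" and cl: "\<forall>A\<in>L. \<forall>B\<in>L. jprod A B \<in> L"
    using J unfolding jordan_subalgebra_def by auto
  have I: "mat 1 \<in> L" by (rule one_in_L[OF J])
  have symL: "transpose A = A" if "A \<in> L" for A using that LS by (auto simp: Sym_def)
  have Wsym: "transpose W = W" unfolding W_def by (rule sample_cov_sym)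
  define P where "P = proj L W"
  have PL: "P \<in> L" and Porth: "\<forall>Z\<in>L. (W - P) \<bullet> Z = 0"
    using proj_char[OF sL, of W] unfolding P_def by auto
  have main: "let M = matrix_inv P in
         M \<in> L
       \<and> invertible M \<and> P = proj L (matrix_inv M)
       \<and> (\<forall>K\<in>L. invertible K \<and> P = proj L (matrix_inv K) \<longrightarrow> K = M)
       \<and> proj L (jprod M W) = mat 1
       \<and> (sme_exists L W \<longrightarrow> sme L W = M)" if iP: "invertible P"
  proof -
    define M where "M = matrix_inv P"
    have MinL: "M \<in> L" unfolding M_def by (rule inv_in_L[OF J PL iP I])
    have iM: "invertible M" and MM: "matrix_inv M = P" using minv_inv[OF iP] unfolding M_def by auto
    have c1: "P = proj L (matrix_inv M)" using MM proj_id[OF sL PL] by simp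
    have c2: "\<forall>K\<in>L. invertible K \<and> P = proj L (matrix_inv K) \<longrightarrow> K = M"
    proof (intro ballI impI)
      fix K assume K: "K \<in> L" "invertible K \<and> P = proj L (matrix_inv K)"
      have iK: "invertible K" using K(2) by (rule conjunct1)
      have "matrix_inv K \<in> L" by (rule inv_in_L[OF J K(1) iK I])
      hence "P = matrix_inv K" using K(2) proj_id[OF sL] by simp
      moreover have "matrix_inv (matrix_inv K) = K" using minv_inv[OF iK] by (rule conjunct2)
      ultimately show "K = M" unfolding M_def by simp
    qed
    have jMP: "jprod M P = mat 1"
    proof -
      have "M ** P = mat 1" "P ** M = mat 1" using minv[OF iP] unfolding M_def by auto
      thus ?thesis using symL[OF MinL] symL[OF PL]
        by (simp add: jprod_sym scaleR_2[symmetric] del: scaleR_2)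
    qed
    have c3: "proj L (jprod M W) = mat 1"
    proof (rule proj_eqI[OF sL I], intro ballI)
      fix Z assume Z: "Z \<in> L"
      have jZ: "jprod M Z \<in> L" using cl MinL Z by blast
      have "jprod M W \<bullet> Z = W \<bullet> jprod M Z" by (rule jinner[OF symL[OF MinL] Wsym symL[OF Z]])
      also have "\<dots> = P \<bullet> jprod M Z" using Porth jZ by (simp add: inner_diff_left)
      also have "\<dots> = jprod M P \<bullet> Z" by (rule jinner[OF symL[OF MinL] symL[OF PL] symL[OF Z], symmetric])
      finally show "(jprod M W - mat 1) \<bullet> Z = 0" using jMP by (simp add: inner_diff_left)
    qed
    have c4: "sme_exists L W \<longrightarrow> sme L W = M"
    proof
      assume "sme_exists L W"
      hence "\<exists>!K. K \<in> L \<and> proj L (jprod K W) = mat 1" unfolding sme_exists_def .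
      then show "sme L W = M" unfolding sme_def by (rule the1_equality) (simp add: MinL c3)
    qed
    show ?thesis unfolding Let_def M_def[symmetric] by (intro conjI MinL iM c1 c2 c3 c4)
  qed
  show ?thesis unfolding P_def[symmetric] by (intro conjI impI I main)
qed

end
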